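(* Let $\mathbf{W}=\langle W;\to,\neg,{}^{+},{}^{-},1\rangle$ be a quasi-Wajsberg* algebra, $0:=1\to 1$ and $x\wedge y:=\neg(\neg x\vee\neg y)$. Then for any $x,y,z\in W$: (1) $x\vee x=0\to x$ and $x\wedge x=0\to x$; (2) $x\to(y\wedge z)=(x\to y)\wedge(x\to z)$, $(x\wedge y)\to z=(x\to z)\vee(y\to z)$ and $(x\vee y)\to z=(x\to z)\wedge(y\to z)$; (3) $x\to y=(0\to x)\to y=x\to(0\to y)=(0\to x)\to(0\to y)$; (4) $x\vee y=0\to(x\vee y)=(0\to x)\vee y=x\vee(0\to y)=(0\to x)\vee(0\to y)$ and $x\wedge y=0\to(x\wedge y)=(0\to x)\wedge y=x\wedge(0\to y)=(0\to x)\wedge(0\to y)$.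
   Context: A quasi-Wajsberg* algebra is an algebra $\langle W;\to,\neg,{}^{+},{}^{-},1\rangle$ of type $\langle2,1,1,1,0\rangle$ such that for all $x,y,z\in W$: (QW*1) $x\to y=\neg y\to\neg x$; (QW*2) $(x\to 1)\to((y\to 1)\to z)=(y\to 1)\to((x\to 1)\to z)$; (QW*3) $(1\to x)\to 1=1$; (QW*4) $(z\to z)\to(x\to y)=x\to y$; (QW*5) $(1\to 1)\to x^{+}=((1\to 1)\to x)^{+}=(x\to 1)\to 1$ and $(1\to 1)\to x^{-}=((1\to 1)\to x)^{-}=(x\to\neg 1)\to\neg 1$; (QW*6) $x\to y=(y^{+}\to x^{-})\to(x^{+}\to y^{-})$; (QW*7) $\neg(x\to y)=y\to x$; (QW*8) $\neg\neg x=x$; (QW*9) $(x\to(\neg x\to y))^{+}=x^{+}\to(\neg x^{+}\to y^{+})$; (QW*10) $x\vee y=y\vee x$; (QW*11) $x\vee(y\vee z)=(x\vee y)\vee z$; (QW*12) $x\to(y\vee z)=(x\to y)\vee(x\to z)$; where $x\vee y:=((x^{+}\to y^{+})^{+}\to(\neg x)^{-})\to((y^{-}\to x^{-})^{-}\to x^{-})$. Conventions: ${}^+,{}^-$ bind tighter than $\neg$, which binds tighter than $\to$, and $\to$ binds tighter than $\vee,\wedge$. *)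

theory Defs
  imports Main
begin

text \<open>Quasi-Wajsberg* algebras <W; imp, neg, pl, mi, one>, carrier = the whole type 'a.
  imp = \<open>\<rightarrow>\<close>, neg = \<open>\<not>\<close>, pl = \<open>+\<close> (postfix), mi = \<open>-\<close> (postfix).\<close>

definition qw_join :: "('a \<Rightarrow> 'a \<Rightarrow> 'a) \<Rightarrow> ('a \<Rightarrow> 'a) \<Rightarrow> ('a \<Rightarrow> 'a) \<Rightarrow> ('a \<Rightarrow> 'a) \<Rightarrow> 'a \<Rightarrow> 'a \<Rightarrow> 'a"
  where "qw_join imp neg pl mi x y =
    imp (imp (pl (imp (pl x) (pl y))) (mi (neg x)))
        (imp (mi (imp (mi y) (mi x))) (mi x))"

definition qw_meet :: "('a \<Rightarrow> 'a \<Rightarrow> 'a) \<Rightarrow> ('a \<Rightarrow> 'a) \<Rightarrow> ('a \<Rightarrow> 'a) \<Rightarrow> ('a \<Rightarrow> 'a) \<Rightarrow> 'a \<Rightarrow> 'a \<Rightarrow> 'a"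
  where "qw_meet imp neg pl mi x y = neg (qw_join imp neg pl mi (neg x) (neg y))"

definition qw_zero :: "('a \<Rightarrow> 'a \<Rightarrow> 'a) \<Rightarrow> 'a \<Rightarrow> 'a"
  where "qw_zero imp one = imp one one"

definition quasi_wajsberg_star ::
  "('a \<Rightarrow> 'a \<Rightarrow> 'a) \<Rightarrow> ('a \<Rightarrow> 'a) \<Rightarrow> ('a \<Rightarrow> 'a) \<Rightarrow> ('a \<Rightarrow> 'a) \<Rightarrow> 'a \<Rightarrow> bool"
  where "quasi_wajsberg_star imp neg pl mi one \<longleftrightarrow>
    (\<forall>x y. imp x y = imp (neg y) (neg x)) \<and>
    (\<forall>x y z. imp (imp x one) (imp (imp y one) z) = imp (imp y one) (imp (imp x one) z)) \<and>
    (\<forall>x. imp (imp one x) one = one) \<and>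
    (\<forall>x y z. imp (imp z z) (imp x y) = imp x y) \<and>
    (\<forall>x. imp (imp one one) (pl x) = pl (imp (imp one one) x) \<and>
         pl (imp (imp one one) x) = imp (imp x one) one) \<and>
    (\<forall>x. imp (imp one one) (mi x) = mi (imp (imp one one) x) \<and>
         mi (imp (imp one one) x) = imp (imp x (neg one)) (neg one)) \<and>
    (\<forall>x y. imp x y = imp (imp (pl y) (mi x)) (imp (pl x) (mi y))) \<and>
    (\<forall>x y. neg (imp x y) = imp y x) \<and>
    (\<forall>x. neg (neg x) = x) \<and>
    (\<forall>x y. pl (imp x (imp (neg x) y)) = imp (pl x) (imp (neg (pl x)) (pl y))) \<and>
    (\<forall>x y. qw_join imp neg pl mi x y = qw_join imp neg pl mi y x) \<and>
    (\<forall>x y z. qw_join imp neg pl mi x (qw_join imp neg pl mi y z) =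
             qw_join imp neg pl mi (qw_join imp neg pl mi x y) z) \<and>
    (\<forall>x y z. imp x (qw_join imp neg pl mi y z) =
             qw_join imp neg pl mi (imp x y) (imp x z))"

end

theory Submission imports Defs begin
lemma G1:
  fixes imp :: "'a \<Rightarrow> 'a \<Rightarrow> 'a" and neg pl mi :: "'a \<Rightarrow> 'a" and one :: 'a and J M :: "'a \<Rightarrow> 'a \<Rightarrow> 'a"
  assumes a1: "\<And>X Y. imp X Y = imp (neg Y) (neg X)"
  and a2: "\<And>X Y Z. imp (imp X one) (imp (imp Y one) Z) = imp (imp Y one) (imp (imp X one) Z)"
  and a3: "\<And>X. imp (imp one X) one = one"
  and a4: "\<And>X Y Z. imp (imp Z Z) (imp X Y) = imp X Y"
  and a5a: "\<And>X. imp (imp one one) (pl X) = pl (imp (imp one one) X)"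
  and a5b: "\<And>X. pl (imp (imp one one) X) = imp (imp X one) one"
  and a5c: "\<And>X. imp (imp one one) (mi X) = mi (imp (imp one one) X)"
  and a5d: "\<And>X. mi (imp (imp one one) X) = imp (imp X (neg one)) (neg one)"
  and a6: "\<And>X Y. imp X Y = imp (imp (pl Y) (mi X)) (imp (pl X) (mi Y))"
  and a7: "\<And>X Y. neg (imp X Y) = imp Y X"
  and a8: "\<And>X. neg (neg X) = X"
  and a9: "\<And>X Y. pl (imp X (imp (neg X) Y)) = imp (pl X) (imp (neg (pl X)) (pl Y))"
  and jd: "\<And>X Y. J X Y = imp (imp (pl (imp (pl X) (pl Y))) (mi (neg X))) (imp (mi (imp (mi Y) (mi X))) (mi X))"
  and a10: "\<And>X Y. J X Y = J Y X"
  and a11: "\<And>X Y Z. J X (J Y Z) = J (J X Y) Z"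
  and a12: "\<And>X Y Z. imp X (J Y Z) = J (imp X Y) (imp X Z)"
  shows "J x x = imp (imp one one) x"
proof -
  have g1_f24: "\<And>X0. (neg (neg X0)) = X0" by (metis a8)
  have g1_f25: "\<And>X0. one = (imp (imp one X0) one)" by (metis a3)
  have g1_f26: "\<And>X0. (pl (imp (imp one one) X0)) = (imp (imp X0 one) one)" by (metis a5b)
  have g1_f27: "\<And>X0. (imp (imp one one) (mi X0)) = (mi (imp (imp one one) X0))" by (metis a5c)
  have g1_f28: "\<And>X0. (imp (imp one one) (pl X0)) = (pl (imp (imp one one) X0))" by (metis a5a)
  have g1_f29: "\<And>X0. (mi (imp (imp one one) X0)) = (imp (imp X0 (neg one)) (neg one))" by (metis a5d)
  have g1_f30: "\<And>X0 X1. (J X0 X1) = (J X1 X0)" by (metis a10)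
  have g1_f31: "\<And>X0 X1. (neg (imp X0 X1)) = (imp X1 X0)" by (metis a7)
  have g1_f32: "\<And>X0 X1. (imp X0 X1) = (imp (neg X1) (neg X0))" by (metis a1)
  have g1_f34: "\<And>X0 X1. (imp X0 X1) = (imp (imp (pl X1) (mi X0)) (imp (pl X0) (mi X1)))" by (metis a6)
  have g1_f35: "\<And>X0 X1. (pl (imp X0 (imp (neg X0) X1))) = (imp (pl X0) (imp (neg (pl X0)) (pl X1)))" by (metis a9)
  have g1_f36: "\<And>X0 X1. (J X0 X1) = (imp (imp (pl (imp (pl X0) (pl X1))) (mi (neg X0))) (imp (mi (imp (mi X1) (mi X0))) (mi X0)))" by (metis jd)
  have g1_f37: "\<And>X2 X0 X1. (imp X0 X1) = (imp (imp X2 X2) (imp X0 X1))" by (metis a4)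
  have g1_f38: "\<And>X2 X0 X1. (J X0 (J X1 X2)) = (J (J X0 X1) X2)" by (metis a11)
  have g1_f39: "\<And>X2 X0 X1. (imp X0 (J X1 X2)) = (J (imp X0 X1) (imp X0 X2))" by (metis a12)
  have g1_f40: "\<And>X2 X0 X1. (imp (imp X0 one) (imp (imp X1 one) X2)) = (imp (imp X1 one) (imp (imp X0 one) X2))" by (metis a2)
  have g1_f41: "\<And>X0. (imp (imp one one) (pl X0)) = (imp (imp X0 one) one)" by (metis g1_f28 g1_f26)
  have g1_f42: "\<And>X0. (imp (imp one one) (mi X0)) = (imp (imp X0 (neg one)) (neg one))" by (metis g1_f29 g1_f27)
  have g1_f43: "\<And>X0. (neg one) = (imp one (imp one X0))" by (metis g1_f31 g1_f25)
  have g1_f45: "(neg one) = (imp one (neg one))" by (metis g1_f43 g1_f43)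
  have g1_f46: "one = (imp (neg one) one)" by (metis g1_f25 g1_f43)
  have g1_f54: "\<And>X0 X1. (imp X1 (neg X0)) = (imp X0 (neg X1))" by (metis g1_f32 g1_f24)
  have g1_f55: "\<And>X2 X3 X4. (imp X4 (imp X2 X3)) = (imp (imp X3 X2) (neg X4))" by (metis g1_f32 g1_f31)
  have g1_f56: "\<And>X0 X1. (imp (neg X0) X1) = (imp (neg X1) X0)" by (metis g1_f32 g1_f24)
  have g1_f57: "\<And>X2 X3 X4. (imp (imp X2 X3) X4) = (imp (neg X4) (imp X3 X2))" by (metis g1_f32 g1_f31)
  have g1_f66: "\<And>X0 X1. (imp (neg X1) X0) = (neg (imp X1 (neg X0)))" by (metis g1_f31 g1_f54)
  have g1_f69: "\<And>X5. one = (imp (imp X5 (neg one)) one)" by (metis g1_f25 g1_f54)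
  have g1_f90: "\<And>X2 X3. (imp X3 (neg X2)) = (neg (imp (neg X3) X2))" by (metis g1_f31 g1_f56)
  have g1_f135: "\<And>X10 X11 X12. (imp (imp X10 (neg X11)) (neg X12)) = (imp X12 (imp (neg X10) X11))" by (metis g1_f54 g1_f66)
  have g1_f195: "\<And>X25. (neg one) = (imp (imp X25 X25) (neg one))" by (metis g1_f37 g1_f43)
  have g1_f198: "\<And>X2 X0 X1. (imp (imp X1 X2) (imp X0 X0)) = (neg (imp X1 X2))" by (metis g1_f31 g1_f37)
  have g1_f201: "\<And>X2 X0 X1. (imp X2 X1) = (imp (imp X1 X2) (imp X0 X0))" by (metis g1_f198 g1_f31)
  have g1_f233: "\<And>X7. (neg (neg one)) = (imp (neg one) (imp X7 X7))" by (metis g1_f31 g1_f195)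
  have g1_f242: "\<And>X7. one = (imp (neg one) (imp X7 X7))" by (metis g1_f233 g1_f24)
  have g1_f256: "\<And>X3 X4 X5. (J X3 (J X4 X5)) = (J X5 (J X3 X4))" by (metis g1_f38 g1_f30)
  have g1_f284: "\<And>X0 X1. (imp X0 X0) = (imp X1 X1)" by (metis g1_f201 g1_f37)
  have g1_f326: "\<And>X8 X9. (imp (neg (neg X8)) X8) = (neg (imp X9 X9))" by (metis g1_f66 g1_f284)
  have g1_f369: "\<And>X8 X9. (imp X8 X8) = (neg (imp X9 X9))" by (metis g1_f326 g1_f24)
  have g1_f431: "\<And>X10 X8 X9. (imp X10 (imp X8 X8)) = (imp (imp X9 X9) (neg X10))" by (metis g1_f32 g1_f369)
  have g1_f432: "\<And>X11 X12 X13. (imp (imp X11 X11) X13) = (imp (neg X13) (imp X12 X12))" by (metis g1_f32 g1_f369)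
  have g1_f552: "\<And>X2 X3. (imp (imp X3 one) one) = (pl (imp (imp X2 X2) X3))" by (metis g1_f26 g1_f284)
  have g1_f556: "\<And>X0 X1. (imp (imp (imp X0 X1) one) one) = (pl (imp X0 X1))" by (metis g1_f26 g1_f37)
  have g1_f558: "(imp (imp (neg one) one) one) = (pl (neg one))" by (metis g1_f26 g1_f195)
  have g1_f565: "(imp one one) = (pl (neg one))" by (metis g1_f558 g1_f46)
  have g1_f1264: "\<And>X2 X3. (imp (imp X3 one) one) = (imp (imp X2 X2) (pl X3))" by (metis g1_f41 g1_f284)
  have g1_f1271: "\<And>X0. (imp (imp (pl X0) one) one) = (pl (imp (imp X0 one) one))" by (metis g1_f26 g1_f41)
  have g1_f1272: "\<And>X2 X1. (imp (pl X1) (imp one one)) = (imp (imp (imp X1 one) one) (imp X2 X2))" by (metis g1_f201 g1_f41)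
  have g1_f1282: "\<And>X1. (imp (pl X1) (imp one one)) = (imp one (imp X1 one))" by (metis g1_f1272 g1_f201)
  have g1_f1443: "\<And>X0. (imp one one) = (pl (imp one X0))" by (metis g1_f556 g1_f25)
  have g1_f1444: "\<And>X1. (imp one one) = (pl (imp X1 (neg one)))" by (metis g1_f556 g1_f69)
  have g1_f1451: "\<And>X12 X13. (imp one (imp (imp X12 X13) one)) = (neg (pl (imp X12 X13)))" by (metis g1_f31 g1_f556)
  have g1_f1504: "\<And>X2 X3. (imp one (imp X3 one)) = (imp (pl X3) (imp X2 X2))" by (metis g1_f1282 g1_f284)
  have g1_f1535: "\<And>X6 X7. (imp (imp (neg X7) one) one) = (pl (imp X7 (imp X6 X6)))" by (metis g1_f552 g1_f55)
  have g1_f1720: "\<And>X70 X68 X69. (imp (imp X69 X69) X68) = (neg (imp (imp X70 X70) (neg X68)))" by (metis g1_f31 g1_f431)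
  have g1_f1727: "\<And>X90 X88 X89. (imp X88 (neg (imp X89 X89))) = (neg (imp (imp X90 X90) (neg (neg X88))))" by (metis g1_f90 g1_f431)
  have g1_f1816: "\<And>X70 X68 X69. (imp (imp X69 X69) X68) = (neg (imp X68 (imp X70 X70)))" by (metis g1_f1720 g1_f55)
  have g1_f1827: "\<And>X90 X88 X89. (imp X88 (neg (imp X89 X89))) = (neg (imp (neg X88) (imp X90 X90)))" by (metis g1_f1727 g1_f55)
  have g1_f1828: "\<And>X90 X88 X89. (imp X88 (neg (imp X89 X89))) = (neg (imp (imp X90 X90) X88))" by (metis g1_f1827 g1_f57)
  have g1_f1829: "\<And>X90 X88 X89. (neg (imp (imp X90 X90) X88)) = (imp X88 (imp X89 X89))" by (metis g1_f1828 g1_f31)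
  have g1_f1839: "\<And>X2 X3. (imp (imp X2 X2) (mi X3)) = (mi (imp (imp X2 X2) X3))" by (metis g1_f27 g1_f284)
  have g1_f1841: "\<And>X0 X1. (mi (imp X0 X1)) = (imp (imp one one) (mi (imp X0 X1)))" by (metis g1_f27 g1_f37)
  have g1_f1843: "(mi (neg one)) = (imp (imp one one) (mi (neg one)))" by (metis g1_f27 g1_f195)
  have g1_f1846: "(mi one) = (imp (imp one one) (mi one))" by (metis g1_f27 g1_f25)
  have g1_f1864: "(imp (imp (mi one) one) one) = (pl (mi one))" by (metis g1_f26 g1_f1846)
  have g1_f1895: "(pl (imp (mi one) one)) = (imp (pl (mi one)) one)" by (metis g1_f556 g1_f1864)
  have g1_f1896: "(imp (imp (pl (mi one)) one) one) = (pl (pl (mi one)))" by (metis g1_f556 g1_f1864)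
  have g1_f1900: "\<And>X3. (pl (mi one)) = (imp (imp X3 X3) (pl (mi one)))" by (metis g1_f37 g1_f1864)
  have g1_f1901: "(imp one (imp (mi one) one)) = (neg (pl (mi one)))" by (metis g1_f31 g1_f1864)
  have g1_f1954: "(imp (imp (mi (neg one)) one) one) = (pl (mi (neg one)))" by (metis g1_f26 g1_f1843)
  have g1_f1984: "(mi (pl (mi one))) = (imp (imp one one) (mi (pl (mi one))))" by (metis g1_f27 g1_f1900)
  have g1_f2001: "one = (imp (neg (pl (mi one))) one)" by (metis g1_f25 g1_f1901)
  have g1_f2016: "(neg one) = (imp (pl (mi one)) (neg one))" by (metis g1_f90 g1_f2001)
  have g1_f3056: "\<And>X106 X107 X105. (imp (neg X105) (J (neg X106) X107)) = (J (imp X106 X105) (imp (neg X105) X107))" by (metis g1_f39 g1_f32)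
  have g1_f3057: "\<And>X108. (imp (neg one) (J one X108)) = (J one (imp (neg one) X108))" by (metis g1_f39 g1_f46)
  have g1_f3064: "\<And>X118. (imp one (J (neg one) X118)) = (J (neg one) (imp one X118))" by (metis g1_f39 g1_f45)
  have g1_f3110: "\<And>X106 X107 X105. (imp (neg X105) (J X107 (neg X106))) = (J (imp (neg X105) X107) (imp X106 X105))" by (metis g1_f39 g1_f32)
  have g1_f3125: "\<And>X3 X4 X5. (J (imp X3 X5) (imp X3 X4)) = (imp X3 (J X4 X5))" by (metis g1_f39 g1_f30)
  have g1_f5254: "\<And>X6 X4 X5. (imp (mi (imp X4 X5)) (imp X6 X6)) = (neg (mi (imp X4 X5)))" by (metis g1_f1829 g1_f1841)
  have g1_f5414: "\<And>X3 X4 X5. (imp X3 (J X4 X5)) = (imp X3 (J X5 X4))" by (metis g1_f3125 g1_f39)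
  have g1_f5485: "\<And>X14 X15 X13. (imp X15 X15) = (imp (J X13 X14) (J X14 X13))" by (metis g1_f5414 g1_f284)
  have g1_f5921: "\<And>X0. (imp (imp one one) (mi X0)) = (imp (imp one (neg X0)) (neg one))" by (metis g1_f42 g1_f54)
  have g1_f5923: "\<And>X4. (imp (imp one one) (mi (neg one))) = (imp (neg (imp X4 X4)) (neg one))" by (metis g1_f42 g1_f369)
  have g1_f5928: "\<And>X10 X11. (imp (imp one one) (mi (imp X10 X11))) = (imp (imp one (imp X11 X10)) (neg one))" by (metis g1_f42 g1_f55)
  have g1_f5929: "\<And>X12. (imp (imp one one) (mi (imp X12 (neg one)))) = (imp (imp (imp one one) (mi X12)) (neg one))" by (metis g1_f42 g1_f42)
  have g1_f5937: "(imp (neg one) (neg one)) = (imp (imp one one) (mi one))" by (metis g1_f42 g1_f45)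
  have g1_f5938: "(imp (neg one) (neg one)) = (imp (imp one one) (mi (pl (mi one))))" by (metis g1_f42 g1_f2016)
  have g1_f5974: "\<And>X0. (imp (imp one one) (mi X0)) = (imp one (imp (neg one) X0))" by (metis g1_f5921 g1_f135)
  have g1_f5976: "\<And>X4. (imp (imp X4 X4) (neg one)) = (imp (imp one one) (mi (neg one)))" by (metis g1_f5923 g1_f31)
  have g1_f5977: "\<And>X4. (imp (imp X4 X4) (neg one)) = (mi (neg one))" by (metis g1_f5976 g1_f1843)
  have g1_f5978: "(neg one) = (mi (neg one))" by (metis g1_f5977 g1_f195)
  have g1_f5988: "\<And>X10 X11. (imp (imp one one) (mi (imp X10 X11))) = (imp one (imp (imp X11 X10) one))" by (metis g1_f5928 g1_f55)
  have g1_f5989: "\<And>X10 X11. (imp (imp one one) (mi (imp X10 X11))) = (neg (pl (imp X11 X10)))" by (metis g1_f5988 g1_f1451)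
  have g1_f5990: "\<And>X10 X11. (mi (imp X10 X11)) = (neg (pl (imp X11 X10)))" by (metis g1_f5989 g1_f1841)
  have g1_f5991: "\<And>X12. (imp (imp one one) (mi (imp X12 (neg one)))) = (imp one (imp (mi X12) (imp one one)))" by (metis g1_f5929 g1_f55)
  have g1_f5992: "\<And>X12. (mi (imp X12 (neg one))) = (imp one (imp (mi X12) (imp one one)))" by (metis g1_f5991 g1_f1841)
  have g1_f6012: "(imp (neg one) (neg one)) = (mi one)" by (metis g1_f5937 g1_f1846)
  have g1_f6013: "(imp (neg one) (neg one)) = (mi (pl (mi one)))" by (metis g1_f5938 g1_f1984)
  have g1_f6014: "(imp one one) = (mi (pl (mi one)))" by (metis g1_f6013 g1_f32)
  have g1_f6079: "(imp one one) = (mi one)" by (metis g1_f6012 g1_f32)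
  have g1_f6083: "\<And>X3. (imp X3 X3) = (mi one)" by (metis g1_f6012 g1_f284)
  have g1_f6086: "(neg (mi one)) = (imp one (neg (neg one)))" by (metis g1_f90 g1_f6012)
  have g1_f6087: "(imp (imp one one) (mi (neg one))) = (imp (mi one) (neg one))" by (metis g1_f42 g1_f6012)
  have g1_f6088: "(imp one one) = (pl (mi one))" by (metis g1_f1444 g1_f6012)
  have g1_f6090: "one = (imp (mi one) one)" by (metis g1_f69 g1_f6012)
  have g1_f6094: "\<And>X0 X1. (imp X0 X1) = (imp (mi one) (imp X0 X1))" by (metis g1_f37 g1_f6012)
  have g1_f6097: "\<And>X2 X3. (imp X2 X3) = (imp (imp X3 X2) (mi one))" by (metis g1_f201 g1_f6012)
  have g1_f6099: "one = (imp (neg one) (mi one))" by (metis g1_f242 g1_f6012)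
  have g1_f6107: "\<And>X10 X11. (imp X10 (imp X11 X11)) = (imp (mi one) (neg X10))" by (metis g1_f431 g1_f6012)
  have g1_f6111: "\<And>X18. (imp (imp X18 one) one) = (pl (imp (mi one) X18))" by (metis g1_f552 g1_f6012)
  have g1_f6114: "\<And>X19. (imp (imp X19 one) one) = (imp (mi one) (pl X19))" by (metis g1_f1264 g1_f6012)
  have g1_f6115: "\<And>X20. (imp one (imp X20 one)) = (imp (pl X20) (mi one))" by (metis g1_f1504 g1_f6012)
  have g1_f6156: "(imp one one) = (neg (mi one))" by (metis g1_f6086 g1_f24)
  have g1_f6157: "(mi one) = (neg (mi one))" by (metis g1_f6156 g1_f6079)
  have g1_f6158: "(imp (imp one one) (mi (neg one))) = (imp one (neg (mi one)))" by (metis g1_f6087 g1_f54)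
  have g1_f6159: "(imp (imp one one) (mi (neg one))) = (imp one (mi one))" by (metis g1_f6158 g1_f6157)
  have g1_f6160: "(mi (neg one)) = (imp one (mi one))" by (metis g1_f6159 g1_f1843)
  have g1_f6161: "(neg one) = (imp one (mi one))" by (metis g1_f6160 g1_f5978)
  have g1_f6162: "(mi one) = (pl (mi one))" by (metis g1_f6088 g1_f6079)
  have g1_f6170: "\<And>X10. (imp (mi one) (neg X10)) = (imp X10 (mi one))" by (metis g1_f6107 g1_f6083)
  have g1_f6202: "\<And>X1. (imp (mi one) (mi X1)) = (mi (imp (mi one) X1))" by (metis g1_f27 g1_f6079)
  have g1_f6314: "\<And>X21 X20. (mi one) = (imp (J X20 X21) (J X21 X20))" by (metis g1_f6083 g1_f5414)
  have g1_f6379: "\<And>X106 X105. (imp X105 (J X106 X105)) = (J (imp X105 X106) (mi one))" by (metis g1_f39 g1_f6083)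
  have g1_f6855: "\<And>X10 X11 X12. (mi (imp (imp X11 X11) X10)) = (neg (pl (neg (imp (imp X12 X12) X10))))" by (metis g1_f5990 g1_f1829)
  have g1_f6933: "\<And>X2. (neg (imp one one)) = (mi (imp (neg one) X2))" by (metis g1_f5990 g1_f1444)
  have g1_f6936: "\<And>X6. (mi (imp one (imp X6 one))) = (neg (imp (imp (pl X6) one) one))" by (metis g1_f5990 g1_f1271)
  have g1_f6938: "\<And>X7. (neg (imp one one)) = (mi (imp X7 one))" by (metis g1_f5990 g1_f1443)
  have g1_f6940: "\<And>X0 X1. (pl (imp X0 X1)) = (neg (mi (imp X1 X0)))" by (metis g1_f24 g1_f5990)
  have g1_f6961: "\<And>X10 X11 X12. (mi (imp (imp X11 X11) X10)) = (neg (pl (imp X10 (imp X12 X12))))" by (metis g1_f6855 g1_f31)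
  have g1_f6962: "\<And>X10 X11. (mi (imp (imp X11 X11) X10)) = (neg (imp (imp (neg X10) one) one))" by (metis g1_f6961 g1_f1535)
  have g1_f6963: "\<And>X10 X11. (mi (imp (imp X11 X11) X10)) = (imp one (imp (neg X10) one))" by (metis g1_f6962 g1_f31)
  have g1_f6964: "\<And>X10. (imp one (imp (neg X10) one)) = (mi (imp (mi one) X10))" by (metis g1_f6963 g1_f6083)
  have g1_f6965: "\<And>X10. (imp one (imp (neg X10) one)) = (imp (mi one) (mi X10))" by (metis g1_f6964 g1_f6202)
  have g1_f7210: "\<And>X2. (imp one one) = (mi (imp (neg one) X2))" by (metis g1_f6933 g1_f31)
  have g1_f7211: "\<And>X2. (mi one) = (mi (imp (neg one) X2))" by (metis g1_f7210 g1_f6079)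
  have g1_f7216: "\<And>X6. (mi (imp one (imp X6 one))) = (imp one (imp (pl X6) one))" by (metis g1_f6936 g1_f31)
  have g1_f7218: "\<And>X7. (imp one one) = (mi (imp X7 one))" by (metis g1_f6938 g1_f31)
  have g1_f7219: "\<And>X7. (mi one) = (mi (imp X7 one))" by (metis g1_f7218 g1_f6079)
  have g1_f7233: "\<And>X8 X7. (mi one) = (mi (pl (imp X7 X8)))" by (metis g1_f7219 g1_f556)
  have g1_f7851: "\<And>X10. (imp (pl (mi one)) X10) = (imp (imp (pl X10) (imp one one)) (imp (pl (pl (mi one))) (mi X10)))" by (metis g1_f34 g1_f6014)
  have g1_f8010: "\<And>X10. (imp (mi one) X10) = (imp (imp (pl X10) (imp one one)) (imp (pl (mi one)) (mi X10)))" by (metis g1_f7851 g1_f6162)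
  have g1_f8011: "\<And>X10. (imp (mi one) X10) = (imp (imp (pl X10) (imp one one)) (imp (mi one) (mi X10)))" by (metis g1_f8010 g1_f6162)
  have g1_f8012: "\<And>X10. (imp (mi one) X10) = (imp (imp one (imp X10 one)) (imp (mi one) (mi X10)))" by (metis g1_f8011 g1_f1282)
  have g1_f8098: "\<And>X34 X32 X33. (pl (imp X33 (imp X32 X32))) = (neg (mi (neg (imp X33 (imp X34 X34)))))" by (metis g1_f6940 g1_f1816)
  have g1_f8207: "\<And>X34 X32 X33. (pl (imp X33 (imp X32 X32))) = (neg (mi (imp (imp X34 X34) X33)))" by (metis g1_f8098 g1_f31)
  have g1_f8208: "\<And>X34 X32 X33. (pl (imp X33 (imp X32 X32))) = (neg (imp (imp X34 X34) (mi X33)))" by (metis g1_f8207 g1_f1839)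
  have g1_f8209: "\<And>X32 X33. (pl (imp X33 (imp X32 X32))) = (neg (imp (mi one) (mi X33)))" by (metis g1_f8208 g1_f6083)
  have g1_f8210: "\<And>X32 X33. (pl (imp X33 (imp X32 X32))) = (imp (mi X33) (mi one))" by (metis g1_f8209 g1_f31)
  have g1_f8211: "\<And>X33. (imp (mi X33) (mi one)) = (pl (imp X33 (mi one)))" by (metis g1_f8210 g1_f6083)
  have g1_f8785: "\<And>X76 X77. (imp (mi (imp X76 X77)) (imp one one)) = (imp (mi (imp X76 X77)) (mi one))" by (metis g1_f6097 g1_f1841)
  have g1_f8908: "\<And>X76 X77. (neg (mi (imp X76 X77))) = (imp (mi (imp X76 X77)) (mi one))" by (metis g1_f8785 g1_f5254)
  have g1_f8909: "\<And>X76 X77. (pl (imp X77 X76)) = (imp (mi (imp X76 X77)) (mi one))" by (metis g1_f8908 g1_f6940)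
  have g1_f11620: "\<And>X20. (pl (imp (imp (mi one) one) (imp (neg (imp (mi one) one)) X20))) = (imp (imp (pl (mi one)) one) (imp (neg (imp (pl (mi one)) one)) (pl X20)))" by (metis g1_f35 g1_f1895)
  have g1_f11649: "\<And>X0 X1. (imp (imp (neg (pl X0)) (pl X1)) (pl X0)) = (neg (pl (imp X0 (imp (neg X0) X1))))" by (metis g1_f31 g1_f35)
  have g1_f11663: "\<And>X36 X37. (pl (imp (imp (neg (pl X36)) (pl X37)) (pl X36))) = (neg (mi (pl (imp X36 (imp (neg X36) X37)))))" by (metis g1_f6940 g1_f35)
  have g1_f11711: "\<And>X20. (pl (imp (imp (mi one) one) (imp (neg (imp (mi one) one)) X20))) = (imp (imp (pl (mi one)) one) (imp (imp one (pl (mi one))) (pl X20)))" by (metis g1_f11620 g1_f31)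
  have g1_f11712: "\<And>X20. (pl (imp (imp (mi one) one) (imp (neg (imp (mi one) one)) X20))) = (imp (imp (mi one) one) (imp (imp one (mi one)) (pl X20)))" by (metis g1_f11711 g1_f6162)
  have g1_f11713: "\<And>X20. (pl (imp (imp (mi one) one) (imp (neg (imp (mi one) one)) X20))) = (imp (imp (mi one) one) (imp (neg one) (pl X20)))" by (metis g1_f11712 g1_f6161)
  have g1_f11714: "\<And>X20. (pl (imp one (imp (neg one) X20))) = (imp one (imp (neg one) (pl X20)))" by (metis g1_f11713 g1_f6090)
  have g1_f11715: "\<And>X20. (imp one one) = (imp one (imp (neg one) (pl X20)))" by (metis g1_f11714 g1_f1443)
  have g1_f11716: "\<And>X20. (mi one) = (imp one (imp (neg one) (pl X20)))" by (metis g1_f11715 g1_f6079)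
  have g1_f11816: "\<And>X0 X1. (imp (imp (neg (pl X0)) (pl X1)) (pl X0)) = (mi (imp (imp (neg X0) X1) X0))" by (metis g1_f11649 g1_f5990)
  have g1_f11823: "\<And>X36 X37. (neg (mi one)) = (pl (imp (imp (neg (pl X36)) (pl X37)) (pl X36)))" by (metis g1_f11663 g1_f7233)
  have g1_f11824: "\<And>X36 X37. (neg (mi one)) = (pl (mi (imp (imp (neg X36) X37) X36)))" by (metis g1_f11823 g1_f11816)
  have g1_f11825: "\<And>X36 X37. (mi one) = (pl (mi (imp (imp (neg X36) X37) X36)))" by (metis g1_f11824 g1_f6157)
  have g1_f11857: "\<And>X4. (neg (mi one)) = (imp (imp (neg one) (pl X4)) one)" by (metis g1_f31 g1_f11716)
  have g1_f11913: "\<And>X4. (mi one) = (imp (imp (neg one) (pl X4)) one)" by (metis g1_f11857 g1_f6157)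
  have g1_f11965: "\<And>X0. (imp (mi one) one) = (pl (imp (neg one) (pl X0)))" by (metis g1_f556 g1_f11913)
  have g1_f12024: "\<And>X0. one = (pl (imp (neg one) (pl X0)))" by (metis g1_f11965 g1_f6090)
  have g1_f12074: "\<And>X3. (neg one) = (mi (imp (pl X3) (neg one)))" by (metis g1_f5990 g1_f12024)
  have g1_f12128: "\<And>X3. (neg one) = (mi (imp one (neg (pl X3))))" by (metis g1_f12074 g1_f54)
  have g1_f12174: "\<And>X0 X1. (neg one) = (mi (imp one (mi (imp X1 X0))))" by (metis g1_f12128 g1_f5990)
  have g1_f12404: "\<And>X84 X85. (neg one) = (mi (imp one (mi (mi (imp X84 X85)))))" by (metis g1_f12174 g1_f1841)
  have g1_f13494: "\<And>X18 X19 X20. (mi one) = (pl (mi (imp (imp (J X19 X20) (J X20 X19)) X18)))" by (metis g1_f11825 g1_f5485)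
  have g1_f13614: "\<And>X18. (mi one) = (pl (mi (imp (mi one) X18)))" by (metis g1_f13494 g1_f6314)
  have g1_f13615: "\<And>X18. (mi one) = (pl (imp (mi one) (mi X18)))" by (metis g1_f13614 g1_f6202)
  have g1_f13969: "\<And>X1. (mi one) = (imp (imp (mi X1) one) one)" by (metis g1_f13615 g1_f6111)
  have g1_f14376: "\<And>X2. (mi one) = (imp (mi one) (pl (mi X2)))" by (metis g1_f13969 g1_f6114)
  have g1_f14382: "\<And>X3. (imp (mi one) one) = (pl (imp (mi X3) one))" by (metis g1_f556 g1_f13969)
  have g1_f14426: "\<And>X3. one = (pl (imp (mi X3) one))" by (metis g1_f14382 g1_f6090)
  have g1_f14486: "\<And>X8. (neg one) = (mi (imp one (mi X8)))" by (metis g1_f5990 g1_f14426)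
  have g1_f15797: "\<And>X47. (imp (imp (pl (mi one)) one) (imp (imp X47 one) one)) = (imp (imp X47 one) (pl (pl (mi one))))" by (metis g1_f40 g1_f1896)
  have g1_f15847: "\<And>X21 X20. (imp (imp X20 one) (imp one X21)) = (imp one (imp (imp X20 one) X21))" by (metis g1_f40 g1_f69)
  have g1_f15918: "\<And>X50. (imp (imp (mi (neg one)) one) (imp (imp X50 one) one)) = (imp (imp X50 one) (pl (mi (neg one))))" by (metis g1_f40 g1_f1954)
  have g1_f16182: "\<And>X47. (imp (imp (mi one) one) (imp (imp X47 one) one)) = (imp (imp X47 one) (pl (mi one)))" by (metis g1_f15797 g1_f6162)
  have g1_f16183: "\<And>X47. (imp (imp (mi one) one) (imp (imp X47 one) one)) = (imp (imp X47 one) (mi one))" by (metis g1_f16182 g1_f6162)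
  have g1_f16184: "\<And>X47. (imp (imp (mi one) one) (imp (imp X47 one) one)) = (imp one X47)" by (metis g1_f16183 g1_f6097)
  have g1_f16185: "\<And>X47. (imp one X47) = (imp (imp (mi one) one) (imp (mi one) (pl X47)))" by (metis g1_f16184 g1_f6114)
  have g1_f16186: "\<And>X47. (imp one X47) = (imp one (imp (mi one) (pl X47)))" by (metis g1_f16185 g1_f6090)
  have g1_f16337: "\<And>X50. (imp (imp (neg one) one) (imp (imp X50 one) one)) = (imp (imp X50 one) (pl (neg one)))" by (metis g1_f15918 g1_f5978)
  have g1_f16338: "\<And>X50. (imp (imp (neg one) one) (imp (imp X50 one) one)) = (imp (imp X50 one) (imp one one))" by (metis g1_f16337 g1_f565)
  have g1_f16339: "\<And>X50. (imp (imp (neg one) one) (imp (imp X50 one) one)) = (imp one (imp (imp X50 one) one))" by (metis g1_f16338 g1_f15847)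
  have g1_f16340: "\<And>X50. (imp (imp (neg one) one) (imp (imp X50 one) one)) = (neg (pl (imp X50 one)))" by (metis g1_f16339 g1_f1451)
  have g1_f16341: "\<And>X50. (imp (imp (neg one) one) (imp (imp X50 one) one)) = (mi (imp one X50))" by (metis g1_f16340 g1_f5990)
  have g1_f16342: "\<And>X50. (imp (imp (neg one) one) (imp (mi one) (pl X50))) = (mi (imp one X50))" by (metis g1_f16341 g1_f6114)
  have g1_f16343: "\<And>X50. (imp one (imp (mi one) (pl X50))) = (mi (imp one X50))" by (metis g1_f16342 g1_f46)
  have g1_f16344: "\<And>X50. (imp one X50) = (mi (imp one X50))" by (metis g1_f16343 g1_f16186)
  have g1_f16877: "\<And>X21. (imp X21 (neg one)) = (mi (imp X21 (neg one)))" by (metis g1_f16344 g1_f54)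
  have g1_f16881: "\<And>X1. (neg one) = (imp one (neg (pl X1)))" by (metis g1_f16344 g1_f12128)
  have g1_f16884: "\<And>X5. (neg one) = (imp one (mi X5))" by (metis g1_f16344 g1_f14486)
  have g1_f17273: "\<And>X6. (neg (neg one)) = (imp (neg one) (pl X6))" by (metis g1_f66 g1_f16881)
  have g1_f17327: "\<And>X6. one = (imp (neg one) (pl X6))" by (metis g1_f17273 g1_f24)
  have g1_f17397: "\<And>X8. (neg one) = (imp (pl X8) (neg one))" by (metis g1_f31 g1_f17327)
  have g1_f20289: "\<And>X18 X17. (J (imp (neg one) (pl X17)) X18) = (imp (imp (pl (imp one (pl X18))) (mi (neg (imp (neg one) (pl X17))))) (imp (mi (imp (mi X18) (mi (imp (neg one) (pl X17))))) (mi (imp (neg one) (pl X17)))))" by (metis g1_f36 g1_f12024)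
  have g1_f20428: "\<And>X2 X3 X4. (J X2 X3) = (imp (imp X4 X4) (J X2 X3))" by (metis g1_f37 g1_f36)
  have g1_f20536: "\<And>X18 X17. (J (imp (neg one) (pl X17)) X18) = (imp (imp (pl (imp one (pl X18))) (mi (neg (imp (neg one) (pl X17))))) (imp (mi (imp (mi X18) (mi one))) (mi one)))" by (metis g1_f20289 g1_f7211)
  have g1_f20537: "\<And>X18 X17. (J (imp (neg one) (pl X17)) X18) = (imp (imp (pl (imp one (pl X18))) (mi (neg (imp (neg one) (pl X17))))) (pl (imp (mi one) (mi X18))))" by (metis g1_f20536 g1_f8909)
  have g1_f20538: "\<And>X18 X17. (J (imp (neg one) (pl X17)) X18) = (imp (imp (pl (imp one (pl X18))) (mi (neg (imp (neg one) (pl X17))))) (imp (imp (mi X18) one) one))" by (metis g1_f20537 g1_f6111)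
  have g1_f20539: "\<And>X18 X17. (J (imp (neg one) (pl X17)) X18) = (imp (imp (pl (imp one (pl X18))) (mi (neg (imp (neg one) (pl X17))))) (imp (mi one) (pl (mi X18))))" by (metis g1_f20538 g1_f6114)
  have g1_f20540: "\<And>X18 X17. (J (imp (neg one) (pl X17)) X18) = (imp (imp (pl (imp one (pl X18))) (mi (neg (imp (neg one) (pl X17))))) (mi one))" by (metis g1_f20539 g1_f14376)
  have g1_f20541: "\<And>X18 X17. (J (imp (neg one) (pl X17)) X18) = (imp (imp (pl (imp one (pl X18))) (mi (imp (pl X17) (neg one)))) (mi one))" by (metis g1_f20540 g1_f31)
  have g1_f20542: "\<And>X18 X17. (J (imp (neg one) (pl X17)) X18) = (imp (imp (pl (imp one (pl X18))) (imp (pl X17) (neg one))) (mi one))" by (metis g1_f20541 g1_f16877)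
  have g1_f20543: "\<And>X18 X17. (J (imp (neg one) (pl X17)) X18) = (imp (imp (pl (imp one (pl X18))) (neg one)) (mi one))" by (metis g1_f20542 g1_f17397)
  have g1_f20544: "\<And>X18 X17. (imp (neg one) (mi one)) = (J (imp (neg one) (pl X17)) X18)" by (metis g1_f20543 g1_f17397)
  have g1_f20545: "\<And>X18. (imp (neg one) (mi one)) = (J one X18)" by (metis g1_f20544 g1_f17327)
  have g1_f20546: "\<And>X18. one = (J one X18)" by (metis g1_f20545 g1_f6099)
  have g1_f21421: "\<And>X2 X3. (J X2 X3) = (imp (mi one) (J X2 X3))" by (metis g1_f20428 g1_f6083)
  have g1_f24698: "\<And>X5. (imp one (imp (imp one one) X5)) = (imp one (imp (mi one) (imp (imp X5 one) one)))" by (metis g1_f16186 g1_f26)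
  have g1_f24783: "\<And>X5. (imp one (imp (imp one one) X5)) = (imp one (imp (imp X5 one) one))" by (metis g1_f24698 g1_f6094)
  have g1_f24784: "\<And>X5. (imp one (imp (imp one one) X5)) = (neg (pl (imp X5 one)))" by (metis g1_f24783 g1_f1451)
  have g1_f24785: "\<And>X5. (mi (imp one X5)) = (imp one (imp (imp one one) X5))" by (metis g1_f24784 g1_f5990)
  have g1_f24786: "\<And>X5. (mi (imp one X5)) = (imp one (imp (mi one) X5))" by (metis g1_f24785 g1_f6079)
  have g1_f24787: "\<And>X5. (imp one X5) = (imp one (imp (mi one) X5))" by (metis g1_f24786 g1_f16344)
  have g1_f24854: "\<And>X4. (imp one (neg X4)) = (imp one (imp X4 (mi one)))" by (metis g1_f24787 g1_f6170)
  have g1_f24875: "\<And>X0. (imp one X0) = (imp one (pl X0))" by (metis g1_f24787 g1_f16186)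
  have g1_f24898: "\<And>X11. (imp (imp (mi one) X11) one) = (neg (imp one X11))" by (metis g1_f31 g1_f24787)
  have g1_f24976: "\<And>X11. (imp X11 one) = (imp (imp (mi one) X11) one)" by (metis g1_f24898 g1_f31)
  have g1_f25027: "\<And>X7. (imp (pl X7) one) = (neg (imp one X7))" by (metis g1_f31 g1_f24875)
  have g1_f25097: "\<And>X7. (imp X7 one) = (imp (pl X7) one)" by (metis g1_f25027 g1_f31)
  have g1_f26165: "\<And>X4. (imp (neg X4) one) = (imp (imp X4 (mi one)) one)" by (metis g1_f24976 g1_f6170)
  have g1_f30276: "\<And>X39. (imp one (imp X39 (mi one))) = (imp one (imp (mi one) (imp (mi X39) (mi one))))" by (metis g1_f16186 g1_f8211)
  have g1_f30287: "\<And>X50. (imp (imp X50 (mi one)) one) = (imp (imp (mi X50) (mi one)) one)" by (metis g1_f25097 g1_f8211)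
  have g1_f30427: "\<And>X39. (imp one (imp X39 (mi one))) = (imp one (imp (mi X39) (mi one)))" by (metis g1_f30276 g1_f6094)
  have g1_f30428: "\<And>X39. (imp one (imp X39 (mi one))) = (imp one (neg (mi X39)))" by (metis g1_f30427 g1_f24854)
  have g1_f30429: "\<And>X39. (imp one (neg X39)) = (imp one (neg (mi X39)))" by (metis g1_f30428 g1_f24854)
  have g1_f30447: "\<And>X50. (imp (imp X50 (mi one)) one) = (imp (neg (mi X50)) one)" by (metis g1_f30287 g1_f26165)
  have g1_f30448: "\<And>X50. (imp (imp X50 (mi one)) one) = (imp (neg one) (mi X50))" by (metis g1_f30447 g1_f56)
  have g1_f30449: "\<And>X50. (imp (neg X50) one) = (imp (neg one) (mi X50))" by (metis g1_f30448 g1_f26165)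
  have g1_f30462: "\<And>X4. (imp one (neg (imp (imp one one) X4))) = (imp one (neg (imp (imp one one) (mi X4))))" by (metis g1_f30429 g1_f27)
  have g1_f30542: "\<And>X4. (imp one (neg (imp (imp one one) X4))) = (imp one (imp (mi X4) (imp one one)))" by (metis g1_f30462 g1_f31)
  have g1_f30543: "\<And>X4. (mi (imp X4 (neg one))) = (imp one (neg (imp (imp one one) X4)))" by (metis g1_f30542 g1_f5992)
  have g1_f30544: "\<And>X4. (mi (imp X4 (neg one))) = (imp one (imp X4 (imp one one)))" by (metis g1_f30543 g1_f31)
  have g1_f30545: "\<And>X4. (mi (imp X4 (neg one))) = (imp one (imp X4 (mi one)))" by (metis g1_f30544 g1_f6079)
  have g1_f30546: "\<And>X4. (imp one (neg X4)) = (mi (imp X4 (neg one)))" by (metis g1_f30545 g1_f24854)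
  have g1_f30690: "\<And>X9. (imp (mi X9) (neg one)) = (neg (imp (neg X9) one))" by (metis g1_f31 g1_f30449)
  have g1_f30796: "\<And>X9. (imp one (neg X9)) = (imp (mi X9) (neg one))" by (metis g1_f30690 g1_f31)
  have g1_f30896: "\<And>X52. (imp one (neg (imp X52 (neg one)))) = (imp one (neg (imp one (neg X52))))" by (metis g1_f30429 g1_f30546)
  have g1_f31017: "\<And>X52. (imp one (neg (imp X52 (neg one)))) = (imp one (imp (neg X52) one))" by (metis g1_f30896 g1_f31)
  have g1_f31018: "\<And>X52. (imp (mi one) (mi X52)) = (imp one (neg (imp X52 (neg one))))" by (metis g1_f31017 g1_f6965)
  have g1_f31019: "\<And>X52. (imp (mi one) (mi X52)) = (imp one (imp (neg one) X52))" by (metis g1_f31018 g1_f31)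
  have g1_f31480: "\<And>X0. (imp (imp one (neg X0)) (neg one)) = (imp (imp one one) (mi (mi X0)))" by (metis g1_f42 g1_f30796)
  have g1_f31587: "\<And>X0. (imp (imp one (neg X0)) (neg one)) = (imp one (imp (neg one) (mi X0)))" by (metis g1_f31480 g1_f5974)
  have g1_f31588: "\<And>X0. (imp (imp one (neg X0)) (neg one)) = (imp (mi one) (mi (mi X0)))" by (metis g1_f31587 g1_f31019)
  have g1_f31589: "\<And>X0. (imp one (imp (neg one) X0)) = (imp (mi one) (mi (mi X0)))" by (metis g1_f31588 g1_f135)
  have g1_f31590: "\<And>X0. (imp (mi one) (mi X0)) = (imp (mi one) (mi (mi X0)))" by (metis g1_f31589 g1_f31019)
  have g1_f48051: "\<And>X48 X46 X47. (J (imp one (mi (mi (imp X46 X47)))) X48) = (imp (imp (pl (imp (pl (imp one (mi (mi (imp X46 X47))))) (pl X48))) (mi (neg (imp one (mi (mi (imp X46 X47))))))) (imp (mi (imp (mi X48) (neg one))) (neg one)))" by (metis g1_f36 g1_f12404)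
  have g1_f48121: "\<And>X48 X46 X47. (J (imp one (mi (mi (imp X46 X47)))) X48) = (imp (imp (pl (imp (pl (imp one (mi (mi (imp X46 X47))))) (pl X48))) (mi (neg (imp one (mi (mi (imp X46 X47))))))) (imp one (neg (mi (imp (mi X48) (neg one))))))" by (metis g1_f48051 g1_f54)
  have g1_f48122: "\<And>X48 X46 X47. (J (imp one (mi (mi (imp X46 X47)))) X48) = (imp (imp (pl (imp (pl (imp one (mi (mi (imp X46 X47))))) (pl X48))) (mi (neg (imp one (mi (mi (imp X46 X47))))))) (imp one (neg (imp (mi X48) (neg one)))))" by (metis g1_f48121 g1_f30429)
  have g1_f48123: "\<And>X48 X46 X47. (J (imp one (mi (mi (imp X46 X47)))) X48) = (imp (imp (pl (imp (pl (imp one (mi (mi (imp X46 X47))))) (pl X48))) (mi (neg (imp one (mi (mi (imp X46 X47))))))) (imp one (imp (neg one) (mi X48))))" by (metis g1_f48122 g1_f31)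
  have g1_f48124: "\<And>X48 X46 X47. (J (imp one (mi (mi (imp X46 X47)))) X48) = (imp (imp (pl (imp (pl (imp one (mi (mi (imp X46 X47))))) (pl X48))) (mi (neg (imp one (mi (mi (imp X46 X47))))))) (imp (mi one) (mi (mi X48))))" by (metis g1_f48123 g1_f31019)
  have g1_f48125: "\<And>X48 X46 X47. (J (imp one (mi (mi (imp X46 X47)))) X48) = (imp (imp (pl (imp (pl (imp one (mi (mi (imp X46 X47))))) (pl X48))) (mi (neg (imp one (mi (mi (imp X46 X47))))))) (imp (mi one) (mi X48)))" by (metis g1_f48124 g1_f31590)
  have g1_f48126: "\<And>X48 X46 X47. (J (imp one (mi (mi (imp X46 X47)))) X48) = (imp (imp (pl (imp (pl (imp one (mi (mi (imp X46 X47))))) (pl X48))) (mi (imp (mi (mi (imp X46 X47))) one))) (imp (mi one) (mi X48)))" by (metis g1_f48125 g1_f31)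
  have g1_f48127: "\<And>X48 X46 X47. (J (imp one (mi (mi (imp X46 X47)))) X48) = (imp (imp (pl (imp (pl (imp one (mi (mi (imp X46 X47))))) (pl X48))) (mi one)) (imp (mi one) (mi X48)))" by (metis g1_f48126 g1_f7219)
  have g1_f48128: "\<And>X48 X46 X47. (J (imp one (mi (mi (imp X46 X47)))) X48) = (imp (imp one (imp (imp (pl (imp one (mi (mi (imp X46 X47))))) (pl X48)) one)) (imp (mi one) (mi X48)))" by (metis g1_f48127 g1_f6115)
  have g1_f48129: "\<And>X48 X46 X47. (J (imp one (mi (mi (imp X46 X47)))) X48) = (imp (neg (pl (imp (pl (imp one (mi (mi (imp X46 X47))))) (pl X48)))) (imp (mi one) (mi X48)))" by (metis g1_f48128 g1_f1451)
  have g1_f48130: "\<And>X48 X46 X47. (J (imp one (mi (mi (imp X46 X47)))) X48) = (imp (mi (imp (pl X48) (pl (imp one (mi (mi (imp X46 X47))))))) (imp (mi one) (mi X48)))" by (metis g1_f48129 g1_f5990)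
  have g1_f48131: "\<And>X48 X46 X47. (J (imp one (mi (mi (imp X46 X47)))) X48) = (imp (mi (imp (pl X48) (imp one one))) (imp (mi one) (mi X48)))" by (metis g1_f48130 g1_f1443)
  have g1_f48132: "\<And>X48 X46 X47. (J (imp one (mi (mi (imp X46 X47)))) X48) = (imp (mi (imp one (imp X48 one))) (imp (mi one) (mi X48)))" by (metis g1_f48131 g1_f1282)
  have g1_f48133: "\<And>X48 X46 X47. (J (imp one (mi (mi (imp X46 X47)))) X48) = (imp (imp one (imp (pl X48) one)) (imp (mi one) (mi X48)))" by (metis g1_f48132 g1_f7216)
  have g1_f48134: "\<And>X48 X46 X47. (J (imp one (mi (mi (imp X46 X47)))) X48) = (imp (imp one (imp X48 one)) (imp (mi one) (mi X48)))" by (metis g1_f48133 g1_f25097)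
  have g1_f48135: "\<And>X48 X46 X47. (imp (mi one) X48) = (J (imp one (mi (mi (imp X46 X47)))) X48)" by (metis g1_f48134 g1_f8012)
  have g1_f48136: "\<And>X48. (imp (mi one) X48) = (J (neg one) X48)" by (metis g1_f48135 g1_f16884)
  have g1_f48192: "\<And>X3 X4. (J X4 (J (neg one) X3)) = (imp (mi one) (J X3 X4))" by (metis g1_f48136 g1_f256)
  have g1_f48294: "\<And>X3 X4. (J X3 X4) = (J X4 (J (neg one) X3))" by (metis g1_f48192 g1_f21421)
  have g1_f48295: "\<And>X3 X4. (J X3 X4) = (J X4 (imp (mi one) X3))" by (metis g1_f48294 g1_f48136)
  have g1_f48655: "\<And>X10 X9. (J (neg X9) X10) = (J X10 (imp X9 (mi one)))" by (metis g1_f48295 g1_f6170)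
  have g1_f62952: "\<And>X58 X57. (J (neg (pl X57)) X58) = (J X58 (imp one (imp X57 one)))" by (metis g1_f48655 g1_f6115)
  have g1_f65867: "\<And>X162 X163. (imp (neg one) (J (neg (imp one X162)) X163)) = (J one (imp (neg one) X163))" by (metis g1_f3056 g1_f25)
  have g1_f66427: "\<And>X162 X163. (imp (neg one) (J (neg (imp one X162)) X163)) = (imp (neg one) (J one X163))" by (metis g1_f65867 g1_f3057)
  have g1_f66428: "\<And>X162 X163. (imp (neg one) one) = (imp (neg one) (J (neg (imp one X162)) X163))" by (metis g1_f66427 g1_f20546)
  have g1_f66429: "\<And>X162 X163. (imp (neg one) one) = (imp (neg one) (J (imp X162 one) X163))" by (metis g1_f66428 g1_f31)
  have g1_f66430: "\<And>X162 X163. one = (imp (neg one) (J (imp X162 one) X163))" by (metis g1_f66429 g1_f46)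
  have g1_f68322: "\<And>X28 X29. (neg one) = (imp one (neg (J (imp X28 one) X29)))" by (metis g1_f90 g1_f66430)
  have g1_f72713: "\<And>X8 X7. (imp (neg X8) (J (neg (neg X7)) X7)) = (imp (neg X7) (J X8 (neg (neg X8))))" by (metis g1_f3110 g1_f3056)
  have g1_f73854: "\<And>X8 X7. (imp (neg X8) (J (neg (neg X7)) X7)) = (imp (neg X7) (J X8 X8))" by (metis g1_f72713 g1_f24)
  have g1_f73855: "\<And>X8 X7. (imp (neg X7) (J X8 X8)) = (imp (neg X8) (J X7 (neg (neg X7))))" by (metis g1_f73854 g1_f30)
  have g1_f73856: "\<And>X8 X7. (imp (neg X7) (J X8 X8)) = (imp (neg X8) (J X7 X7))" by (metis g1_f73855 g1_f24)
  have g1_f75791: "\<And>X36 X34 X35. (J (neg one) (imp one X36)) = (imp one (J (neg (J (imp X34 one) X35)) X36))" by (metis g1_f39 g1_f68322)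
  have g1_f75800: "\<And>X59 X60 X61. (J (imp one X61) (neg one)) = (imp one (J (neg (J (imp X59 one) X60)) X61))" by (metis g1_f3125 g1_f68322)
  have g1_f75885: "\<And>X36 X34 X35. (imp one (J (neg one) X36)) = (imp one (J (neg (J (imp X34 one) X35)) X36))" by (metis g1_f75791 g1_f3064)
  have g1_f75886: "\<And>X36 X34 X35. (imp one (imp (mi one) X36)) = (imp one (J (neg (J (imp X34 one) X35)) X36))" by (metis g1_f75885 g1_f48136)
  have g1_f75887: "\<And>X36 X34 X35. (imp one X36) = (imp one (J (neg (J (imp X34 one) X35)) X36))" by (metis g1_f75886 g1_f24787)
  have g1_f75910: "\<And>X61. (imp one X61) = (J (imp one X61) (neg one))" by (metis g1_f75800 g1_f75887)
  have g1_f511641: "(J x x) = (imp (mi one) (J x x))" by (metis g1_f21421)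
  have g1_f511363: "(J x x) = (imp (neg (mi one)) (J x x))" by (metis g1_f511641 g1_f6157)
  have g1_f78145: "\<exists>X5. (J x x) = (imp (neg x) (J (mi X5) (mi one)))" by (metis g1_f511363 g1_f73856)
  have g1_f78144: "\<exists>X5. (J x x) = (imp (neg x) (J (mi one) (imp (mi one) (mi X5))))" by (metis g1_f78145 g1_f48295)
  have g1_f78079: "\<exists>X5. (J x x) = (imp (neg x) (J (mi one) (neg (imp (mi X5) (mi one)))))" by (metis g1_f78144 g1_f31)
  have g1_f76159: "\<exists>X43. (J x x) = (imp (neg x) (J (mi one) (neg (pl X43))))" by (metis g1_f78079 g1_f8211)
  have g1_f76158: "\<exists>X43. (J x x) = (imp (neg x) (J (neg (pl X43)) (mi one)))" by (metis g1_f76159 g1_f30)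
  have g1_f76157: "\<exists>X43. (J x x) = (imp (neg x) (J (mi one) (imp one (imp X43 one))))" by (metis g1_f76158 g1_f62952)
  have g1_f76156: "\<exists>X43. (J x x) = (imp (neg x) (J (mi one) (imp (imp one X43) (neg one))))" by (metis g1_f76157 g1_f55)
  have g1_f76155: "\<exists>X43. (J x x) = (imp (neg x) (J (imp (imp one X43) (neg one)) (mi one)))" by (metis g1_f76156 g1_f30)
  have g1_f76046: "\<exists>X43. (J x x) = (imp (neg x) (imp (imp one X43) (J (neg one) (imp one X43))))" by (metis g1_f76155 g1_f6379)
  have g1_f5568: "\<exists>X148 X147. (J x x) = (imp (neg x) (imp (J X147 X148) (J X148 X147)))" by (metis g1_f76046 g1_f75910)
  have g1_f3289: "\<exists>X50. (J x x) = (imp (neg x) (imp X50 X50))" by (metis g1_f5568 g1_f5414)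
  have g1_f341: "\<exists>X44. (J x x) = (imp (imp X44 X44) x)" by (metis g1_f3289 g1_f432)
  have g1_f23: "(imp (imp one one) x) = (J x x)" by (metis g1_f341 g1_f284)
  show ?thesis by (metis g1_f23)
qed
lemma Rest:
  fixes imp :: "'a \<Rightarrow> 'a \<Rightarrow> 'a" and neg pl mi :: "'a \<Rightarrow> 'a" and one :: 'a and J M :: "'a \<Rightarrow> 'a \<Rightarrow> 'a"
  assumes a1: "\<And>X Y. imp X Y = imp (neg Y) (neg X)"
  and a2: "\<And>X Y Z. imp (imp X one) (imp (imp Y one) Z) = imp (imp Y one) (imp (imp X one) Z)"
  and a3: "\<And>X. imp (imp one X) one = one"
  and a4: "\<And>X Y Z. imp (imp Z Z) (imp X Y) = imp X Y"
  and a5a: "\<And>X. imp (imp one one) (pl X) = pl (imp (imp one one) X)"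
  and a5b: "\<And>X. pl (imp (imp one one) X) = imp (imp X one) one"
  and a5c: "\<And>X. imp (imp one one) (mi X) = mi (imp (imp one one) X)"
  and a5d: "\<And>X. mi (imp (imp one one) X) = imp (imp X (neg one)) (neg one)"
  and a6: "\<And>X Y. imp X Y = imp (imp (pl Y) (mi X)) (imp (pl X) (mi Y))"
  and a7: "\<And>X Y. neg (imp X Y) = imp Y X"
  and a8: "\<And>X. neg (neg X) = X"
  and a9: "\<And>X Y. pl (imp X (imp (neg X) Y)) = imp (pl X) (imp (neg (pl X)) (pl Y))"
  and jd: "\<And>X Y. J X Y = imp (imp (pl (imp (pl X) (pl Y))) (mi (neg X))) (imp (mi (imp (mi Y) (mi X))) (mi X))"
  and a10: "\<And>X Y. J X Y = J Y X"
  and a11: "\<And>X Y Z. J X (J Y Z) = J (J X Y) Z"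
  and a12: "\<And>X Y Z. imp X (J Y Z) = J (imp X Y) (imp X Z)"
  and md: "\<And>X Y. M X Y = neg (J (neg X) (neg Y))"
  and Zd: "Z = imp one one"
  shows "\<forall>x y z.
     (J x x = imp Z x \<and> M x x = imp Z x) \<and>
     (imp x (M y z) = M (imp x y) (imp x z) \<and>
      imp (M x y) z = J (imp x z) (imp y z) \<and>
      imp (J x y) z = M (imp x z) (imp y z)) \<and>
     (imp x y = imp (imp Z x) y \<and> imp (imp Z x) y = imp x (imp Z y) \<and>
      imp x (imp Z y) = imp (imp Z x) (imp Z y)) \<and>
     (J x y = imp Z (J x y) \<and> imp Z (J x y) = J (imp Z x) y \<and>
      J (imp Z x) y = J x (imp Z y) \<and> J x (imp Z y) = J (imp Z x) (imp Z y)) \<and>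
     (M x y = imp Z (M x y) \<and> imp Z (M x y) = M (imp Z x) y \<and>
      M (imp Z x) y = M x (imp Z y) \<and> M x (imp Z y) = M (imp Z x) (imp Z y))"
proof -
  have g1: "\<And>x. J x x = imp Z x" unfolding Zd
    by (rule G1[of imp neg one pl mi J], (rule a1 a2 a3 a4 a5a a5b a5c a5d a6 a7 a8 a9 jd a10 a11 a12)+)
  have L0: "\<And>A B. imp Z (imp A B) = imp A B" unfolding Zd by (rule a4)
  have nZ: "neg Z = Z" unfolding Zd by (rule a7)
  have g2: "\<And>x. M x x = imp Z x"
    by (metis md g1 a7 a1 nZ a8)
  have g7: "\<And>x y. imp x (imp Z y) = imp x y"
    by (metis g1 a12 L0)
  have xZ: "\<And>x. imp x Z = imp Z (neg x)" by (metis a1 nZ)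
  have g6: "\<And>x y. imp (imp Z x) y = imp x y"
    by (metis a1 a7 xZ g7)
  have g3: "\<And>x y z. imp x (M y z) = M (imp x y) (imp x z)"
  proof -
    fix x y z
    have "M (imp x y) (imp x z) = neg (J (imp (neg x) (neg y)) (imp (neg x) (neg z)))"
      by (metis md a7 a1)
    also have "\<dots> = neg (imp (neg x) (J (neg y) (neg z)))" by (simp only: a12)
    also have "\<dots> = imp x (M y z)" by (metis a7 a1 a8 md)
    finally show "imp x (M y z) = M (imp x y) (imp x z)" by simp
  qed
  have g4: "\<And>x y z. imp (M x y) z = J (imp x z) (imp y z)"
    by (metis a1 a8 md a12)
  have g5: "\<And>x y z. imp (J x y) z = M (imp x z) (imp y z)"
    by (metis md a7 a12)
  have pZ: "\<And>x. pl (imp Z x) = imp Z (pl x)" unfolding Zd by (rule a5a[symmetric])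
  have mZ: "\<And>x. mi (imp Z x) = imp Z (mi x)" unfolding Zd by (rule a5c[symmetric])
  have nZx: "\<And>x. neg (imp Z x) = imp Z (neg x)" by (metis a7 xZ)
  have g9: "\<And>x y. J x y = imp Z (J x y)" by (metis jd L0)
  have g10: "\<And>x y. J (imp Z x) y = J x y"
    by (simp only: jd pZ mZ nZx g6 g7)
  have g13: "\<And>x y. M x y = imp Z (M x y)" by (metis md g9 a7 L0)
  have g14: "\<And>x y. M (imp Z x) y = M x y"
    by (metis md nZx g10)
  show ?thesis
    by (metis g1 g2 g3 g4 g5 g6 g7 g9 g10 g13 g14 a10 md)
qed
theorem proposition3p3:
  fixes imp :: "'a \<Rightarrow> 'a \<Rightarrow> 'a" and neg pl mi :: "'a \<Rightarrow> 'a" and one :: 'a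
  assumes W: "quasi_wajsberg_star imp neg pl mi one"
  defines "J \<equiv> qw_join imp neg pl mi" and "M \<equiv> qw_meet imp neg pl mi"
    and "Z \<equiv> qw_zero imp one"
  shows "\<forall>x y z.
     (J x x = imp Z x \<and> M x x = imp Z x) \<and>
     (imp x (M y z) = M (imp x y) (imp x z) \<and>
      imp (M x y) z = J (imp x z) (imp y z) \<and>
      imp (J x y) z = M (imp x z) (imp y z)) \<and>
     (imp x y = imp (imp Z x) y \<and> imp (imp Z x) y = imp x (imp Z y) \<and>
      imp x (imp Z y) = imp (imp Z x) (imp Z y)) \<and>
     (J x y = imp Z (J x y) \<and> imp Z (J x y) = J (imp Z x) y \<and>
      J (imp Z x) y = J x (imp Z y) \<and> J x (imp Z y) = J (imp Z x) (imp Z y)) \<and>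
     (M x y = imp Z (M x y) \<and> imp Z (M x y) = M (imp Z x) y \<and>
      M (imp Z x) y = M x (imp Z y) \<and> M x (imp Z y) = M (imp Z x) (imp Z y))"
proof -
  have ax: "(\<forall>x y. imp x y = imp (neg y) (neg x)) \<and>
    (\<forall>x y z. imp (imp x one) (imp (imp y one) z) = imp (imp y one) (imp (imp x one) z)) \<and>
    (\<forall>x. imp (imp one x) one = one) \<and>
    (\<forall>x y z. imp (imp z z) (imp x y) = imp x y) \<and>
    (\<forall>x. imp (imp one one) (pl x) = pl (imp (imp one one) x) \<and>
         pl (imp (imp one one) x) = imp (imp x one) one) \<and>
    (\<forall>x. imp (imp one one) (mi x) = mi (imp (imp one one) x) \<and>
         mi (imp (imp one one) x) = imp (imp x (neg one)) (neg one)) \<and>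
    (\<forall>x y. imp x y = imp (imp (pl y) (mi x)) (imp (pl x) (mi y))) \<and>
    (\<forall>x y. neg (imp x y) = imp y x) \<and>
    (\<forall>x. neg (neg x) = x) \<and>
    (\<forall>x y. pl (imp x (imp (neg x) y)) = imp (pl x) (imp (neg (pl x)) (pl y))) \<and>
    (\<forall>x y. J x y = J y x) \<and>
    (\<forall>x y z. J x (J y z) = J (J x y) z) \<and>
    (\<forall>x y z. imp x (J y z) = J (imp x y) (imp x z))"
    using W unfolding quasi_wajsberg_star_def J_def by blast
  have d1: "\<And>X Y. J X Y = imp (imp (pl (imp (pl X) (pl Y))) (mi (neg X))) (imp (mi (imp (mi Y) (mi X))) (mi X))"
    unfolding J_def qw_join_def by (rule refl)
  have d2: "\<And>X Y. M X Y = neg (J (neg X) (neg Y))" unfolding M_def J_def qw_meet_def by (rule refl)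
  have d3: "Z = imp one one" unfolding Z_def qw_zero_def by (rule refl)
  show ?thesis
    apply (rule Rest[where neg=neg and pl=pl and mi=mi and one=one])
    using ax d1 d2 d3 apply simp_all
    done
qed

end
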